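(* Let $Q$ be a QNP and let $P'=T_D(Q)$ be its direct translation. If $\pi$ solves $Q$ and $\bar\tau=\bar s_0,\bar s_1,\dots$ is an infinite $\pi$-trajectory of $P'$, then there is a variable $X$ and a recurrent state $\bar s$ of $\bar\tau$ such that $\pi(\bar s)$ is a $Dec(X)$ action and $X$ is in $stack(\bar s')$ for every recurrent state $\bar s'$ of $\bar\tau$.
   Context: QNPs: $Q=\langle F,V,I,O,G\rangle$ with propositional variables $F$, numerical variables $V$ (non-negative reals), literals $p,\neg p$, $X=0$, $X>0$; actions with precondition $Pre(a)$, propositional effects, numerical effects $N(a)\subseteq\{Inc(X),Dec(X)\}$ (at most one per variable; $Dec(X)\in N(a)$ implies $X>0\in Pre(a)$). A state assigns truth values to $F$ and reals $\ge0$ to $V$; initial states satisfy $I$ (closed world); goal states satisfy $G$; for applicable $a$, successors apply propositional effects, strictly increase $X$ for $Inc(X)$, strictly decrease $X$ for $Dec(X)$, rest unchanged. For $\epsilon>0$ an $\epsilon$-trajectory is such a sequence from an initial state where each change of a variable has magnitude $\ge\epsilon$ unless it goes from a value $<\epsilon$ to $0$. The boolean state $\bar s$ is the truth valuation on atoms $p$ and $X=0$; a policy maps states to actions depending only on the boolean state; a maximal $\pi$-trajectory is infinite without goal, ends at its first goal state, or ends where $\pi$ is undefined/inapplicable; $\pi$ solves $Q$ iff for all $\epsilon>0$ all maximal $\epsilon$-$\pi$-trajectories reach a goal state. $T_D(Q)$ is the FOND problem over $F\cup\{p_{X=0}\}$ reading $X=0$/$X>0$ as $p_{X=0}$/$\neg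 p_{X=0}$, replacing $Inc(X)$ by the deterministic effect $\neg p_{X=0}$ and $Dec(X)$ by the nondeterministic effect $\neg p_{X=0}\mid p_{X=0}$; its states are boolean states and $\pi$ acts via $\bar s\mapsto\pi(s)$. A $\pi$-trajectory of it starts at its initial state, applies $\pi$ and follows possible successors; recurrent states are those occurring infinitely often. $Dec(X)$/$Inc(X)$ actions are those coming from actions with $Dec(X)$/$Inc(X)$ in $N(a)$. The policy graph $\mathcal G$ has as nodes the states of $T_D(Q)$ reachable under $\pi$ and edges $(\bar s,\bar s')$ for $\bar s'$ a possible successor of $\bar s$ under $\pi(\bar s)$. Fix a run of the following (modified) Sieve procedure on $\mathcal G$: repeatedly compute the strongly connected components (SCCs) of the current graph, choose an SCC $C$ and a variable $X$ such that $\pi(\bar s)$ is a $Dec(X)$ action for some $\bar s\in C$, $\pi(\bar s)$ is an $Inc(X)$ action for no $\bar s\in C$, and $X$ was not chosen in an earlier iteration for a component containing the states of $C$; remove all edges $(\bar s,\bar s')$ with $\bar s,\bar s'\in C$ and $\pi(\bar s)$ a $Dec(X)$ action; stop when no such choice exists (the run is not stopped merely because the graph became acyclic). For a state $\bar s$, $stack(\bar s)$ is the sequence, in order of iterations, of the variables $X$ chosen in those iterations whose chosen component $C$ contains $\bar s$. *)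

theory Defs
  imports Complex_Main
begin

text \<open>Propositional variables F are the (finite) type 'p, numerical variables V the
(finite) type 'v.  A boolean atom is either a propositional variable p (Inl p) or
the atom "X = 0" (Inr X).  A literal is an atom with a polarity; (Inr X, False)
is the literal X > 0.\<close>

datatype numeff = Inc | Dec

type_synonym ('p, 'v) batom = "'p + 'v"
type_synonym ('p, 'v) lit = "('p, 'v) batom \<times> bool"
type_synonym ('p, 'v) bstate = "('p, 'v) batom \<Rightarrow> bool"
type_synonym ('p, 'v) qstate = "('p \<Rightarrow> bool) \<times> ('v \<Rightarrow> real)"

record ('p, 'v, 'a) qnp =
  acts :: "'a set"
  pre  :: "'a \<Rightarrow> ('p, 'v) lit set"
  eff  :: "'a \<Rightarrow> ('p \<times> bool) set"
  neff :: "'a \<Rightarrow> 'v \<Rightarrow> numeff option"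
  init :: "('p, 'v) lit set"
  goal :: "('p, 'v) lit set"

definition wf_qnp :: "('p, 'v, 'a) qnp \<Rightarrow> bool" where
  "wf_qnp Q \<longleftrightarrow> finite (acts Q)
     \<and> (\<forall>a\<in>acts Q. \<forall>X. neff Q a X = Some Dec \<longrightarrow> (Inr X, False) \<in> pre Q a)
     \<and> (\<forall>a\<in>acts Q. \<forall>p. \<not> ((p, True) \<in> eff Q a \<and> (p, False) \<in> eff Q a))
     \<and> (\<forall>atm. \<not> ((atm, True) \<in> init Q \<and> (atm, False) \<in> init Q))"

definition is_policy :: "('p, 'v, 'a) qnp \<Rightarrow> (('p, 'v) bstate \<Rightarrow> 'a option) \<Rightarrow> bool" where
  "is_policy Q \<pi> \<longleftrightarrow> (\<forall>bs a. \<pi> bs = Some a \<longrightarrow> a \<in> acts Q)"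

definition bholds :: "('p, 'v) lit \<Rightarrow> ('p, 'v) bstate \<Rightarrow> bool" where
  "bholds l bs \<longleftrightarrow> bs (fst l) = snd l"

definition bstate_of :: "('p, 'v) qstate \<Rightarrow> ('p, 'v) bstate" where
  "bstate_of s atm = (case atm of Inl p \<Rightarrow> fst s p | Inr X \<Rightarrow> snd s X = 0)"

definition holds :: "('p, 'v) lit \<Rightarrow> ('p, 'v) qstate \<Rightarrow> bool" where
  "holds l s \<longleftrightarrow> bholds l (bstate_of s)"

definition valid_state :: "('p, 'v) qstate \<Rightarrow> bool" where
  "valid_state s \<longleftrightarrow> (\<forall>X. snd s X \<ge> 0)"

definition prop_update :: "('p \<times> bool) set \<Rightarrow> bool \<Rightarrow> 'p \<Rightarrow> bool" where
  "prop_update E old p = (if (p, True) \<in> E then True else if (p, False) \<in> E then False else old)"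

definition qinit :: "('p, 'v, 'a) qnp \<Rightarrow> ('p, 'v) qstate \<Rightarrow> bool" where
  "qinit Q s \<longleftrightarrow> valid_state s \<and> (\<forall>l\<in>init Q. holds l s)
      \<and> (\<forall>atm. (atm, True) \<notin> init Q \<longrightarrow> \<not> bstate_of s atm)"

definition qgoal :: "('p, 'v, 'a) qnp \<Rightarrow> ('p, 'v) qstate \<Rightarrow> bool" where
  "qgoal Q s \<longleftrightarrow> (\<forall>l\<in>goal Q. holds l s)"

definition qapplicable :: "('p, 'v, 'a) qnp \<Rightarrow> 'a \<Rightarrow> ('p, 'v) qstate \<Rightarrow> bool" where
  "qapplicable Q a s \<longleftrightarrow> (\<forall>l\<in>pre Q a. holds l s)"

definition qsucc :: "('p, 'v, 'a) qnp \<Rightarrow> 'a \<Rightarrow> ('p, 'v) qstate \<Rightarrow> ('p, 'v) qstate \<Rightarrow> bool" where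
  "qsucc Q a s s' \<longleftrightarrow> valid_state s \<and> valid_state s' \<and> qapplicable Q a s
     \<and> (\<forall>p. fst s' p = prop_update (eff Q a) (fst s p) p)
     \<and> (\<forall>X. (case neff Q a X of
               Some Inc \<Rightarrow> snd s' X > snd s X
             | Some Dec \<Rightarrow> snd s' X < snd s X
             | None \<Rightarrow> snd s' X = snd s X))"

definition eps_ok :: "real \<Rightarrow> ('p, 'v) qstate \<Rightarrow> ('p, 'v) qstate \<Rightarrow> bool" where
  "eps_ok \<epsilon> s s' \<longleftrightarrow> (\<forall>X. snd s' X \<noteq> snd s X \<longrightarrow>
       (\<bar>snd s' X - snd s X\<bar> \<ge> \<epsilon> \<or> (snd s X < \<epsilon> \<and> snd s' X = 0)))"

definition qpstep :: "('p, 'v, 'a) qnp \<Rightarrow> (('p, 'v) bstate \<Rightarrow> 'a option) \<Rightarrow> real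
                      \<Rightarrow> ('p, 'v) qstate \<Rightarrow> ('p, 'v) qstate \<Rightarrow> bool" where
  "qpstep Q \<pi> \<epsilon> s s' \<longleftrightarrow> (\<exists>a. \<pi> (bstate_of s) = Some a \<and> qsucc Q a s s' \<and> eps_ok \<epsilon> s s')"

text \<open>pi solves Q: for every eps > 0, every maximal eps-pi-trajectory reaches a goal state.
 Maximal trajectories are (i) infinite ones (these must contain a goal state, at which the
 maximal trajectory is cut), (ii) finite ones ending in their first goal state (fine), or
 (iii) finite goal-free ones ending where pi is undefined or inapplicable (forbidden).\<close>

definition solves :: "('p, 'v, 'a) qnp \<Rightarrow> (('p, 'v) bstate \<Rightarrow> 'a option) \<Rightarrow> bool" where
  "solves Q \<pi> \<longleftrightarrow> (\<forall>\<epsilon>>0.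
     (\<forall>f. qinit Q (f 0) \<and> (\<forall>i. qpstep Q \<pi> \<epsilon> (f i) (f (Suc i))) \<longrightarrow> (\<exists>i. qgoal Q (f i)))
   \<and> (\<forall>ss. ss \<noteq> [] \<and> qinit Q (hd ss)
          \<and> (\<forall>i. Suc i < length ss \<longrightarrow> qpstep Q \<pi> \<epsilon> (ss ! i) (ss ! Suc i))
          \<and> (\<forall>s\<in>set ss. \<not> qgoal Q s)
          \<and> (case \<pi> (bstate_of (last ss)) of None \<Rightarrow> True | Some a \<Rightarrow> \<not> qapplicable Q a (last ss))
          \<longrightarrow> False))"

definition td_init :: "('p, 'v, 'a) qnp \<Rightarrow> ('p, 'v) bstate" where
  "td_init Q atm = ((atm, True) \<in> init Q)"

definition td_goal :: "('p, 'v, 'a) qnp \<Rightarrow> ('p, 'v) bstate \<Rightarrow> bool" where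
  "td_goal Q bs \<longleftrightarrow> (\<forall>l\<in>goal Q. bholds l bs)"

definition td_succ :: "('p, 'v, 'a) qnp \<Rightarrow> 'a \<Rightarrow> ('p, 'v) bstate \<Rightarrow> ('p, 'v) bstate \<Rightarrow> bool" where
  "td_succ Q a bs bs' \<longleftrightarrow> (\<forall>l\<in>pre Q a. bholds l bs)
     \<and> (\<forall>p. bs' (Inl p) = prop_update (eff Q a) (bs (Inl p)) p)
     \<and> (\<forall>X. (case neff Q a X of
               Some Inc \<Rightarrow> bs' (Inr X) = False
             | Some Dec \<Rightarrow> True
             | None \<Rightarrow> bs' (Inr X) = bs (Inr X)))"

definition td_step :: "('p, 'v, 'a) qnp \<Rightarrow> (('p, 'v) bstate \<Rightarrow> 'a option)
                       \<Rightarrow> ('p, 'v) bstate \<Rightarrow> ('p, 'v) bstate \<Rightarrow> bool" where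
  "td_step Q \<pi> bs bs' \<longleftrightarrow> \<not> td_goal Q bs \<and> (\<exists>a. \<pi> bs = Some a \<and> td_succ Q a bs bs')"

definition td_inf_traj :: "('p, 'v, 'a) qnp \<Rightarrow> (('p, 'v) bstate \<Rightarrow> 'a option)
                           \<Rightarrow> (nat \<Rightarrow> ('p, 'v) bstate) \<Rightarrow> bool" where
  "td_inf_traj Q \<pi> \<tau> \<longleftrightarrow> \<tau> 0 = td_init Q \<and> (\<forall>i. td_step Q \<pi> (\<tau> i) (\<tau> (Suc i)))"

definition recurrent :: "(nat \<Rightarrow> 'b) \<Rightarrow> 'b set" where
  "recurrent \<tau> = {s. infinite {i. \<tau> i = s}}"

definition dec_at :: "('p, 'v, 'a) qnp \<Rightarrow> (('p, 'v) bstate \<Rightarrow> 'a option) \<Rightarrow> 'v \<Rightarrow> ('p, 'v) bstate \<Rightarrow> bool" where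
  "dec_at Q \<pi> X bs \<longleftrightarrow> (\<exists>a. \<pi> bs = Some a \<and> neff Q a X = Some Dec)"

definition inc_at :: "('p, 'v, 'a) qnp \<Rightarrow> (('p, 'v) bstate \<Rightarrow> 'a option) \<Rightarrow> 'v \<Rightarrow> ('p, 'v) bstate \<Rightarrow> bool" where
  "inc_at Q \<pi> X bs \<longleftrightarrow> (\<exists>a. \<pi> bs = Some a \<and> neff Q a X = Some Inc)"

definition pg_nodes :: "('p, 'v, 'a) qnp \<Rightarrow> (('p, 'v) bstate \<Rightarrow> 'a option) \<Rightarrow> ('p, 'v) bstate set" where
  "pg_nodes Q \<pi> = {bs. (td_init Q, bs) \<in> {(x, y). td_step Q \<pi> x y}\<^sup>*}"

definition pg_edges :: "('p, 'v, 'a) qnp \<Rightarrow> (('p, 'v) bstate \<Rightarrow> 'a option) \<Rightarrow> ('p, 'v) bstate rel" where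
  "pg_edges Q \<pi> = {(x, y). x \<in> pg_nodes Q \<pi> \<and> td_step Q \<pi> x y}"

definition is_scc :: "'b set \<Rightarrow> 'b rel \<Rightarrow> 'b set \<Rightarrow> bool" where
  "is_scc N E C \<longleftrightarrow> (\<exists>s\<in>N. C = {t\<in>N. (s, t) \<in> E\<^sup>* \<and> (t, s) \<in> E\<^sup>*})"

definition remove_edges :: "('p, 'v, 'a) qnp \<Rightarrow> (('p, 'v) bstate \<Rightarrow> 'a option)
     \<Rightarrow> ('p, 'v) bstate rel \<Rightarrow> ('p, 'v) bstate set \<times> 'v \<Rightarrow> ('p, 'v) bstate rel" where
  "remove_edges Q \<pi> E CX = E - {(s, t). s \<in> fst CX \<and> t \<in> fst CX \<and> dec_at Q \<pi> (snd CX) s}"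

definition sieve_graph :: "('p, 'v, 'a) qnp \<Rightarrow> (('p, 'v) bstate \<Rightarrow> 'a option)
     \<Rightarrow> (('p, 'v) bstate set \<times> 'v) list \<Rightarrow> ('p, 'v) bstate rel" where
  "sieve_graph Q \<pi> prev = foldl (remove_edges Q \<pi>) (pg_edges Q \<pi>) prev"

definition sieve_choice_ok :: "('p, 'v, 'a) qnp \<Rightarrow> (('p, 'v) bstate \<Rightarrow> 'a option)
     \<Rightarrow> (('p, 'v) bstate set \<times> 'v) list \<Rightarrow> ('p, 'v) bstate set \<times> 'v \<Rightarrow> bool" where
  "sieve_choice_ok Q \<pi> prev CX \<longleftrightarrow>
     is_scc (pg_nodes Q \<pi>) (sieve_graph Q \<pi> prev) (fst CX)
   \<and> (\<exists>s\<in>fst CX. dec_at Q \<pi> (snd CX) s)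
   \<and> (\<forall>s\<in>fst CX. \<not> inc_at Q \<pi> (snd CX) s)
   \<and> (\<forall>CX'\<in>set prev. snd CX' = snd CX \<longrightarrow> \<not> fst CX \<subseteq> fst CX')"

definition sieve_run :: "('p, 'v, 'a) qnp \<Rightarrow> (('p, 'v) bstate \<Rightarrow> 'a option)
     \<Rightarrow> (('p, 'v) bstate set \<times> 'v) list \<Rightarrow> bool" where
  "sieve_run Q \<pi> run \<longleftrightarrow> (\<forall>i<length run. sieve_choice_ok Q \<pi> (take i run) (run ! i))
     \<and> (\<forall>CX. \<not> sieve_choice_ok Q \<pi> run CX)"

definition stack :: "(('p, 'v) bstate set \<times> 'v) list \<Rightarrow> ('p, 'v) bstate \<Rightarrow> 'v list" where
  "stack run bs = map snd (filter (\<lambda>CX. bs \<in> fst CX) run)"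

end

theory Submission
  imports Defs "HOL-Library.Infinite_Set"
begin

lemma foldl_remove_sub: "foldl (remove_edges Q \<pi>) E xs \<subseteq> E"
proof (induction xs arbitrary: E)
  case Nil then show ?case by simp
next
  case (Cons x xs)
  have "foldl (remove_edges Q \<pi>) E (x # xs) = foldl (remove_edges Q \<pi>) (remove_edges Q \<pi> E x) xs" by simp
  also have "\<dots> \<subseteq> remove_edges Q \<pi> E x" by (rule Cons.IH)
  also have "\<dots> \<subseteq> E" by (auto simp: remove_edges_def)
  finally show ?case .
qed

lemma sieve_graph_later:
  assumes "j < length run"
  shows "sieve_graph Q \<pi> run \<subseteq> remove_edges Q \<pi> (sieve_graph Q \<pi> (take j run)) (run!j)"
proof -
  have eq: "take j run @ run!j # drop (Suc j) run = run" using assms by (rule id_take_nth_drop[symmetric])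
  have "sieve_graph Q \<pi> run = foldl (remove_edges Q \<pi>) (pg_edges Q \<pi>) (take j run @ run!j # drop (Suc j) run)"
    by (simp only: sieve_graph_def eq)
  also have "\<dots> = foldl (remove_edges Q \<pi>) (remove_edges Q \<pi> (sieve_graph Q \<pi> (take j run)) (run!j)) (drop (Suc j) run)"
    by (simp add: sieve_graph_def)
  also have "\<dots> \<subseteq> remove_edges Q \<pi> (sieve_graph Q \<pi> (take j run)) (run!j)" by (rule foldl_remove_sub)
  finally show ?thesis .
qed

definition owalk :: "'b rel \<Rightarrow> 'b \<Rightarrow> 'b \<Rightarrow> 'b list \<Rightarrow> bool" where
  "owalk E x y cs \<longleftrightarrow> cs \<noteq> [] \<and> cs!0 = x \<and> (\<forall>n. Suc n < length cs \<longrightarrow> (cs!n, cs!Suc n) \<in> E) \<and> (last cs, y) \<in> E"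

lemma owalk_trancl:
  "(x,y) \<in> E\<^sup>+ \<Longrightarrow> \<exists>cs. owalk E x y cs \<and> (\<forall>e\<in>set cs. (x,e)\<in>E\<^sup>* \<and> (e,y)\<in>E\<^sup>+)"
proof (induction rule: converse_trancl_induct)
  case (base u)
  then show ?case by (intro exI[of _ "[u]"]) (auto simp: owalk_def)
next
  case (step u z)
  then obtain cs where cs: "owalk E z y cs" "\<forall>e\<in>set cs. (z,e)\<in>E\<^sup>* \<and> (e,y)\<in>E\<^sup>+" by blast
  have "owalk E u y (u # cs)"
    using cs(1) step.hyps(1) unfolding owalk_def
    by (auto simp: nth_Cons split: nat.splits)
  moreover have "\<forall>e\<in>set (u#cs). (u,e)\<in>E\<^sup>* \<and> (e,y)\<in>E\<^sup>+"
    using cs(2) step.hyps by (auto intro: converse_rtrancl_into_rtrancl)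
  ultimately show ?case by blast
qed

lemma owalk_app:
  assumes "owalk E x y cs" "owalk E y z ds" shows "owalk E x z (cs @ ds)"
  unfolding owalk_def
proof (intro conjI allI impI)
  show "cs @ ds \<noteq> []" using assms by (auto simp: owalk_def)
  show "(cs @ ds) ! 0 = x" using assms by (auto simp: owalk_def nth_append)
  show "(last (cs @ ds), z) \<in> E" using assms by (auto simp: owalk_def)
  fix n assume n: "Suc n < length (cs @ ds)"
  consider "Suc n < length cs" | "Suc n = length cs" | "length cs \<le> n" by linarith
  then show "((cs @ ds) ! n, (cs @ ds) ! Suc n) \<in> E"
  proof cases
    case 1 then show ?thesis using assms by (auto simp: owalk_def nth_append)
  next
    case 2
    then have nn: "n = length cs - 1" by simp
    then have "(cs @ ds) ! n = last cs" using 2 assms by (auto simp: owalk_def nth_append last_conv_nth)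
    moreover have "(cs @ ds) ! Suc n = y" using 2 assms by (auto simp: owalk_def nth_append)
    ultimately show ?thesis using assms by (auto simp: owalk_def)
  next
    case 3
    then have "(cs @ ds) ! n = ds ! (n - length cs)" "(cs @ ds) ! Suc n = ds ! Suc (n - length cs)"
      by (auto simp: nth_append Suc_diff_le)
    moreover have "Suc (n - length cs) < length ds" using n 3 by auto
    ultimately show ?thesis using assms by (auto simp: owalk_def)
  qed
qed

lemma owalk_wrap:
  assumes "owalk E r r cs" "n < length cs" shows "(cs!n, cs!(Suc n mod length cs)) \<in> E"
proof (cases "Suc n < length cs")
  case True then show ?thesis using assms by (auto simp: owalk_def)
next
  case False
  then have "Suc n = length cs" using assms by auto
  then have "n = length cs - 1" "Suc n mod length cs = 0" by auto
  then show ?thesis using assms by (auto simp: owalk_def last_conv_nth)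
qed

lemma walk_all:
  assumes "(r,r) \<in> E\<^sup>+" "finite S" "\<forall>c\<in>S. (r,c)\<in>E\<^sup>* \<and> (c,r)\<in>E\<^sup>*"
  shows "\<exists>cs. owalk E r r cs \<and> S \<subseteq> set cs \<and> (\<forall>e\<in>set cs. (r,e)\<in>E\<^sup>* \<and> (e,r)\<in>E\<^sup>*)"
  using assms(2,3)
proof (induction S rule: finite_induct)
  case empty
  then show ?case using owalk_trancl[OF assms(1)] by (meson empty_subsetI trancl_into_rtrancl)
next
  case (insert c S)
  then obtain cs where cs: "owalk E r r cs" "S \<subseteq> set cs" "\<forall>e\<in>set cs. (r,e)\<in>E\<^sup>* \<and> (e,r)\<in>E\<^sup>*" by auto
  have "\<exists>ds. owalk E r r ds \<and> c \<in> set ds \<and> (\<forall>e\<in>set ds. (r,e)\<in>E\<^sup>* \<and> (e,r)\<in>E\<^sup>*)"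
  proof (cases "c = r")
    case True
    obtain ds where "owalk E r r ds" "\<forall>e\<in>set ds. (r,e)\<in>E\<^sup>* \<and> (e,r)\<in>E\<^sup>+" using owalk_trancl[OF assms(1)] by blast
    moreover have "c \<in> set ds" using True calculation by (auto simp: owalk_def)
    ultimately show ?thesis by (meson trancl_into_rtrancl)
  next
    case False
    have "(r,c) \<in> E\<^sup>+" "(c,r) \<in> E\<^sup>+" using insert.prems False by (auto simp: rtrancl_eq_or_trancl)
    then obtain d1 d2 where d1: "owalk E r c d1" "\<forall>e\<in>set d1. (r,e)\<in>E\<^sup>* \<and> (e,c)\<in>E\<^sup>+"
      and d2: "owalk E c r d2" "\<forall>e\<in>set d2. (c,e)\<in>E\<^sup>* \<and> (e,r)\<in>E\<^sup>+"
      using owalk_trancl by metis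
    have "owalk E r r (d1 @ d2)" by (rule owalk_app[OF d1(1) d2(1)])
    moreover have "c \<in> set (d1 @ d2)" using d2(1) by (auto simp: owalk_def)
    moreover have "\<forall>e\<in>set (d1@d2). (r,e)\<in>E\<^sup>* \<and> (e,r)\<in>E\<^sup>*"
      using d1(2) d2(2) insert.prems
      by (auto intro: rtrancl_trans trancl_into_rtrancl)
    ultimately show ?thesis by blast
  qed
  then obtain ds where "owalk E r r ds" "c \<in> set ds" "\<forall>e\<in>set ds. (r,e)\<in>E\<^sup>* \<and> (e,r)\<in>E\<^sup>*" by blast
  then show ?case using cs owalk_app[OF cs(1), of r ds]
    by (intro exI[of _ "cs @ ds"]) auto
qed

lemma mod_hit:
  assumes "0 < (L::nat)" "idx < L" shows "\<exists>t. i \<le> t \<and> t < i + L \<and> t mod L = idx"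
proof -
  define q where "q = i div L"
  define r where "r = i mod L"
  have i: "i = L*q + r" and r: "r < L" using assms by (auto simp: q_def r_def)
  show ?thesis
  proof (cases "r \<le> idx")
    case True
    show ?thesis by (rule exI[of _ "L*q + idx"]) (use True i r assms in auto)
  next
    case False
    have "(idx + Suc q * L) mod L = idx" using assms by (metis mod_mult_self1 mod_less)
    then show ?thesis by (intro exI[of _ "idx + Suc q * L"]) (use False i r assms in auto)
  qed
qed


definition Dset :: "('p, 'v, 'a) qnp \<Rightarrow> (('p, 'v) bstate \<Rightarrow> 'a option) \<Rightarrow> (nat \<Rightarrow> ('p, 'v) bstate) \<Rightarrow> 'v \<Rightarrow> nat \<Rightarrow> nat set" where
  "Dset Q \<pi> \<sigma> X i = {k. i \<le> k \<and> dec_at Q \<pi> X (\<sigma> k) \<and> (\<forall>j. i \<le> j \<and> j < k \<longrightarrow> \<not> inc_at Q \<pi> X (\<sigma> j))}"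

lemma dec_not_inc: "dec_at Q \<pi> X s \<Longrightarrow> \<not> inc_at Q \<pi> X s"
  by (auto simp: dec_at_def inc_at_def)

lemma Dset_dec: assumes "dec_at Q \<pi> X (\<sigma> i)"
  shows "Dset Q \<pi> \<sigma> X i = insert i (Dset Q \<pi> \<sigma> X (Suc i))"
proof -
  have ni: "\<not> inc_at Q \<pi> X (\<sigma> i)" using assms by (rule dec_not_inc)
  show ?thesis
  proof (intro set_eqI iffI)
    fix k assume "k \<in> Dset Q \<pi> \<sigma> X i"
    then show "k \<in> insert i (Dset Q \<pi> \<sigma> X (Suc i))"
      unfolding Dset_def by (cases "k = i") auto
  next
    fix k assume "k \<in> insert i (Dset Q \<pi> \<sigma> X (Suc i))"
    then show "k \<in> Dset Q \<pi> \<sigma> X i"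
      using assms ni unfolding Dset_def by (auto simp: le_Suc_eq) (metis le_antisym not_less_eq_eq)
  qed
qed

lemma Dset_noinc: "\<not> inc_at Q \<pi> X (\<sigma> i) \<Longrightarrow> Dset Q \<pi> \<sigma> X (Suc i) \<subseteq> Dset Q \<pi> \<sigma> X i"
  unfolding Dset_def by (auto simp: le_Suc_eq) (metis le_antisym not_less_eq_eq)

primrec vv :: "('p, 'v, 'a) qnp \<Rightarrow> (('p, 'v) bstate \<Rightarrow> 'a option) \<Rightarrow> (nat \<Rightarrow> ('p, 'v) bstate) \<Rightarrow> nat \<Rightarrow> 'v \<Rightarrow> nat \<Rightarrow> nat" where
  "vv Q \<pi> \<sigma> B X 0 = (if \<sigma> 0 (Inr X) then 0 else B)"
| "vv Q \<pi> \<sigma> B X (Suc i) = (if \<sigma> (Suc i) (Inr X) then 0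
      else if inc_at Q \<pi> X (\<sigma> i) then vv Q \<pi> \<sigma> B X i + B
      else if dec_at Q \<pi> X (\<sigma> i) then vv Q \<pi> \<sigma> B X i - 1
      else vv Q \<pi> \<sigma> B X i)"

lemma sem:
  assumes wf: "wf_qnp Q" and pol: "is_policy Q \<pi>" and sol: "solves Q \<pi>"
    and s0: "\<sigma> 0 = td_init Q" and st: "\<And>i. td_step Q \<pi> (\<sigma> i) (\<sigma> (Suc i))"
    and bd: "\<And>X i. Dset Q \<pi> \<sigma> X i \<subseteq> {i..<i+M}"
  shows False
proof -
  have fin: "\<And>X i. finite (Dset Q \<pi> \<sigma> X i)" using bd finite_subset by (meson finite_atLeastLessThan)
  have cardle: "\<And>X i. card (Dset Q \<pi> \<sigma> X i) \<le> M"
  proof -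
    fix X i
    have "card (Dset Q \<pi> \<sigma> X i) \<le> card {i..<i+M}" by (rule card_mono) (auto simp: bd)
    then show "card (Dset Q \<pi> \<sigma> X i) \<le> M" by simp
  qed
  define B where "B = Suc M"
  define v where "v = vv Q \<pi> \<sigma> B"
  have stp: "\<And>i. \<exists>a. \<pi> (\<sigma> i) = Some a \<and> td_succ Q a (\<sigma> i) (\<sigma> (Suc i))"
    and ng: "\<And>i. \<not> td_goal Q (\<sigma> i)" using st by (auto simp: td_step_def)
  have caseX: "\<And>a bs bs' X. td_succ Q a bs bs' \<Longrightarrow> (case neff Q a X of
               Some Inc \<Rightarrow> bs' (Inr X) = False
             | Some Dec \<Rightarrow> True
             | None \<Rightarrow> bs' (Inr X) = bs (Inr X))"
    by (auto simp: td_succ_def)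
  have prezero: "\<And>i a X. \<pi> (\<sigma> i) = Some a \<Longrightarrow> td_succ Q a (\<sigma> i) (\<sigma> (Suc i)) \<Longrightarrow> neff Q a X = Some Dec \<Longrightarrow> \<sigma> i (Inr X) = False"
  proof -
    fix i a X assume a: "\<pi> (\<sigma> i) = Some a" and ts: "td_succ Q a (\<sigma> i) (\<sigma> (Suc i))" and d: "neff Q a X = Some Dec"
    have "a \<in> acts Q" using pol a by (auto simp: is_policy_def)
    then have "(Inr X, False) \<in> pre Q a" using wf d by (auto simp: wf_qnp_def)
    then show "\<sigma> i (Inr X) = False" using ts by (auto simp: td_succ_def bholds_def)
  qed
  have inv: "\<And>i X. (\<sigma> i (Inr X) \<longrightarrow> v X i = 0) \<and> (\<not> \<sigma> i (Inr X) \<longrightarrow> card (Dset Q \<pi> \<sigma> X i) + 1 \<le> v X i)"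
  proof -
    fix i X show "(\<sigma> i (Inr X) \<longrightarrow> v X i = 0) \<and> (\<not> \<sigma> i (Inr X) \<longrightarrow> card (Dset Q \<pi> \<sigma> X i) + 1 \<le> v X i)"
    proof (induction i)
      case 0 show ?case using cardle[of X 0] by (simp add: v_def B_def)
    next
      case (Suc i)
      obtain a where a: "\<pi> (\<sigma> i) = Some a" and ts: "td_succ Q a (\<sigma> i) (\<sigma> (Suc i))" using stp by blast
      have cx: "case neff Q a X of Some Inc \<Rightarrow> \<sigma> (Suc i) (Inr X) = False | Some Dec \<Rightarrow> True
             | None \<Rightarrow> \<sigma> (Suc i) (Inr X) = \<sigma> i (Inr X)" by (rule caseX[OF ts])
      show ?case
      proof (cases "neff Q a X")
        case None
        then have eq: "\<sigma> (Suc i) (Inr X) = \<sigma> i (Inr X)" using cx by simp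
        have ni: "\<not> inc_at Q \<pi> X (\<sigma> i)" "\<not> dec_at Q \<pi> X (\<sigma> i)" using a None by (auto simp: inc_at_def dec_at_def)
        have "card (Dset Q \<pi> \<sigma> X (Suc i)) \<le> card (Dset Q \<pi> \<sigma> X i)"
          by (rule card_mono[OF fin Dset_noinc[of Q \<pi> X \<sigma> i, OF ni(1)]])
        then show ?thesis using Suc.IH eq ni by (auto simp: v_def)
      next
        case (Some e)
        show ?thesis
        proof (cases e)
          case Inc
          then have ic: "inc_at Q \<pi> X (\<sigma> i)" and nz: "\<sigma> (Suc i) (Inr X) = False"
            using a Some cx by (auto simp: inc_at_def)
          show ?thesis using ic nz cardle[of X "Suc i"] by (auto simp: v_def B_def)
        next
          case Dec
          then have dc: "dec_at Q \<pi> X (\<sigma> i)" using a Some by (auto simp: dec_at_def)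
          have ni: "\<not> inc_at Q \<pi> X (\<sigma> i)" using dc by (rule dec_not_inc)
          have nz: "\<sigma> i (Inr X) = False" using prezero[OF a ts] Some Dec by simp
          have "i \<notin> Dset Q \<pi> \<sigma> X (Suc i)" by (auto simp: Dset_def)
          then have "card (Dset Q \<pi> \<sigma> X i) = Suc (card (Dset Q \<pi> \<sigma> X (Suc i)))"
            using Dset_dec[of Q \<pi> X \<sigma> i, OF dc] fin by simp
          then show ?thesis using Suc.IH nz dc ni by (auto simp: v_def)
        qed
      qed
    qed
  qed
  define f where "f i = ((\<lambda>p. \<sigma> i (Inl p)), (\<lambda>X. real (v X i)))" for i
  have bs: "\<And>i. bstate_of (f i) = \<sigma> i"
  proof
    fix i atm show "bstate_of (f i) atm = \<sigma> i atm"
    proof (cases atm)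
      case (Inl p) then show ?thesis by (simp add: bstate_of_def f_def)
    next
      case (Inr X) then show ?thesis using inv[of i X] by (auto simp: bstate_of_def f_def)
    qed
  qed
  have valid: "\<And>i. valid_state (f i)" by (simp add: valid_state_def f_def)
  have qi: "qinit Q (f 0)"
    unfolding qinit_def holds_def bs s0
  proof (intro conjI ballI allI impI)
    show "valid_state (f 0)" by (rule valid)
  next
    fix l assume l: "l \<in> init Q"
    obtain atm b where lab: "l = (atm, b)" by force
    show "bholds l (td_init Q)"
    proof (cases b)
      case True then show ?thesis using l lab by (simp add: bholds_def td_init_def)
    next
      case False then show ?thesis using l lab wf by (auto simp: bholds_def td_init_def wf_qnp_def)
    qed
  next
    fix atm assume "(atm, True) \<notin> init Q" then show "\<not> td_init Q atm" by (simp add: td_init_def)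
  qed
  have qs: "\<And>i. qpstep Q \<pi> 1 (f i) (f (Suc i))"
  proof -
    fix i
    obtain a where a: "\<pi> (\<sigma> i) = Some a" and ts: "td_succ Q a (\<sigma> i) (\<sigma> (Suc i))" using stp by blast
    have num: "\<And>X. case neff Q a X of
               Some Inc \<Rightarrow> v X (Suc i) > v X i
             | Some Dec \<Rightarrow> v X (Suc i) < v X i
             | None \<Rightarrow> v X (Suc i) = v X i"
    proof -
      fix X
      have cx: "case neff Q a X of Some Inc \<Rightarrow> \<sigma> (Suc i) (Inr X) = False | Some Dec \<Rightarrow> True
             | None \<Rightarrow> \<sigma> (Suc i) (Inr X) = \<sigma> i (Inr X)" by (rule caseX[OF ts])
      show "case neff Q a X of
               Some Inc \<Rightarrow> v X (Suc i) > v X i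
             | Some Dec \<Rightarrow> v X (Suc i) < v X i
             | None \<Rightarrow> v X (Suc i) = v X i"
      proof (cases "neff Q a X")
        case None
        then have eq: "\<sigma> (Suc i) (Inr X) = \<sigma> i (Inr X)" using cx by simp
        have ni: "\<not> inc_at Q \<pi> X (\<sigma> i)" "\<not> dec_at Q \<pi> X (\<sigma> i)" using a None by (auto simp: inc_at_def dec_at_def)
        then show ?thesis using None eq inv[of i X] by (auto simp: v_def)
      next
        case (Some e)
        show ?thesis
        proof (cases e)
          case Inc
          then have ic: "inc_at Q \<pi> X (\<sigma> i)" and nz: "\<sigma> (Suc i) (Inr X) = False"
            using a Some cx by (auto simp: inc_at_def)
          then show ?thesis using Some Inc by (auto simp: v_def B_def)
        next
          case Dec
          then have dc: "dec_at Q \<pi> X (\<sigma> i)" using a Some by (auto simp: dec_at_def)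
          have ni: "\<not> inc_at Q \<pi> X (\<sigma> i)" using dc by (rule dec_not_inc)
          have nz: "\<sigma> i (Inr X) = False" using prezero[OF a ts] Some Dec by simp
          then have "1 \<le> v X i" using inv[of i X] by auto
          then show ?thesis using Some Dec dc ni by (auto simp: v_def)
        qed
      qed
    qed
    have "qsucc Q a (f i) (f (Suc i))"
      unfolding qsucc_def
    proof (intro conjI allI)
      show "valid_state (f i)" "valid_state (f (Suc i))" by (rule valid)+
      show "qapplicable Q a (f i)" using ts by (auto simp: qapplicable_def holds_def bs td_succ_def)
      fix p show "fst (f (Suc i)) p = prop_update (eff Q a) (fst (f i) p) p"
        using ts by (auto simp: f_def td_succ_def)
    next
      fix X show "case neff Q a X of
               Some Inc \<Rightarrow> snd (f (Suc i)) X > snd (f i) X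
             | Some Dec \<Rightarrow> snd (f (Suc i)) X < snd (f i) X
             | None \<Rightarrow> snd (f (Suc i)) X = snd (f i) X"
        using num[of X] by (auto simp: f_def split: option.splits numeff.splits)
    qed
    moreover have "eps_ok 1 (f i) (f (Suc i))"
      unfolding eps_ok_def
    proof (intro allI impI disjI1)
      fix X assume "snd (f (Suc i)) X \<noteq> snd (f i) X"
      then have "v X (Suc i) \<noteq> v X i" by (simp add: f_def)
      then show "1 \<le> \<bar>snd (f (Suc i)) X - snd (f i) X\<bar>" by (simp add: f_def)
    qed
    ultimately show "qpstep Q \<pi> 1 (f i) (f (Suc i))" using a by (auto simp: qpstep_def bs)
  qed
  have "\<exists>i. qgoal Q (f i)" using sol qi qs unfolding solves_def by (meson zero_less_one)
  then show False using ng by (auto simp: qgoal_def td_goal_def holds_def bs)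
qed


theorem theorem14:
  fixes Q :: "('p :: finite, 'v :: finite, 'a) qnp"
    and \<pi> :: "('p, 'v) bstate \<Rightarrow> 'a option"
    and run :: "(('p, 'v) bstate set \<times> 'v) list"
    and \<tau> :: "nat \<Rightarrow> ('p, 'v) bstate"
  assumes "wf_qnp Q"
    and "is_policy Q \<pi>"
    and "solves Q \<pi>"
    and "sieve_run Q \<pi> run"
    and "td_inf_traj Q \<pi> \<tau>"
  shows "\<exists>X s. s \<in> recurrent \<tau> \<and> dec_at Q \<pi> X s
           \<and> (\<forall>s'\<in>recurrent \<tau>. X \<in> set (stack run s'))"
proof -
  note wf = assms(1) and pol = assms(2) and sol = assms(3) and sr = assms(4)
  define R where "R = recurrent \<tau>"
  have tj0: "\<tau> 0 = td_init Q" and tjs: "\<And>i. td_step Q \<pi> (\<tau> i) (\<tau> (Suc i))"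
    using assms(5) by (auto simp: td_inf_traj_def)
  obtain N0 where N0: "\<And>i. N0 \<le> i \<Longrightarrow> \<tau> i \<in> R"
  proof -
    have "finite (\<Union>s\<in>-R. {i. \<tau> i = s})"
      by (rule finite_UN_I) (auto simp: R_def recurrent_def)
    then obtain k where k: "\<forall>n\<in>(\<Union>s\<in>-R. {i. \<tau> i = s}). n < k" using finite_nat_set_iff_bounded by blast
    show ?thesis
    proof (rule that[of k])
      fix i assume "k \<le> i"
      show "\<tau> i \<in> R"
      proof (rule ccontr)
        assume "\<tau> i \<notin> R"
        then have "i \<in> (\<Union>s\<in>-R. {i. \<tau> i = s})" by simp
        then have "i < k" by (rule bspec[OF k])
        then show False using \<open>k \<le> i\<close> by simp
      qed
    qed
  qed
  have inf: "\<And>s n. s \<in> R \<Longrightarrow> \<exists>i\<ge>n. \<tau> i = s"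
    by (auto simp: R_def recurrent_def infinite_nat_iff_unbounded_le)
  define ER where "ER = {(\<tau> i, \<tau> (Suc i)) | i. N0 \<le> i}"
  have path: "\<And>i j. N0 \<le> i \<Longrightarrow> i \<le> j \<Longrightarrow> (\<tau> i, \<tau> j) \<in> ER\<^sup>*"
  proof -
    fix i j assume i: "N0 \<le> i" and ij: "i \<le> j"
    show "(\<tau> i, \<tau> j) \<in> ER\<^sup>*" using ij
    proof (induction j rule: dec_induct)
      case base then show ?case by simp
    next
      case (step n)
      have "(\<tau> n, \<tau> (Suc n)) \<in> ER" using i step.hyps unfolding ER_def by auto
      with step.IH show ?case by (rule rtrancl_into_rtrancl)
    qed
  qed
  have Rconn: "\<And>s t. s \<in> R \<Longrightarrow> t \<in> R \<Longrightarrow> (s, t) \<in> ER\<^sup>*"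
  proof -
    fix s t assume s: "s \<in> R" and t: "t \<in> R"
    obtain i where i: "i \<ge> N0" "\<tau> i = s" using inf[OF s] by blast
    obtain j where j: "j \<ge> i" "\<tau> j = t" using inf[OF t] by blast
    show "(s, t) \<in> ER\<^sup>*" using path[OF i(1) j(1)] i j by simp
  qed
  have ER_R: "\<And>s t. (s, t) \<in> ER \<Longrightarrow> s \<in> R \<and> t \<in> R" using N0 unfolding ER_def by auto
  have reach: "\<And>i. \<tau> i \<in> pg_nodes Q \<pi>"
  proof -
    fix i show "\<tau> i \<in> pg_nodes Q \<pi>"
    proof (induction i)
      case 0 then show ?case by (simp add: pg_nodes_def tj0)
    next
      case (Suc i) then show ?case using tjs[of i] unfolding pg_nodes_def
        by (auto intro: rtrancl_into_rtrancl)
    qed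
  qed
  have ER_pg: "ER \<subseteq> pg_edges Q \<pi>" using reach tjs unfolding ER_def pg_edges_def by auto
  define hit where "hit j \<longleftrightarrow> (\<exists>s\<in>R. s \<in> fst (run!j) \<and> dec_at Q \<pi> (snd (run!j)) s)" for j
  have keep: "\<And>j. j \<le> length run \<Longrightarrow> (\<forall>j'<j. \<not> hit j') \<Longrightarrow> ER \<subseteq> sieve_graph Q \<pi> (take j run)"
  proof -
    fix j show "j \<le> length run \<Longrightarrow> (\<forall>j'<j. \<not> hit j') \<Longrightarrow> ER \<subseteq> sieve_graph Q \<pi> (take j run)"
    proof (induction j)
      case 0 then show ?case using ER_pg by (simp add: sieve_graph_def)
    next
      case (Suc j)
      have jl: "j < length run" using Suc.prems by simp
      have old: "ER \<subseteq> sieve_graph Q \<pi> (take j run)" using Suc by auto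
      have nh: "\<not> hit j" using Suc.prems by auto
      have "sieve_graph Q \<pi> (take (Suc j) run) = remove_edges Q \<pi> (sieve_graph Q \<pi> (take j run)) (run!j)"
        using jl by (simp add: take_Suc_conv_app_nth sieve_graph_def)
      then show ?case using old nh ER_R unfolding hit_def remove_edges_def by auto
    qed
  qed
  show ?thesis
  proof (cases "\<exists>j<length run. hit j")
    case True
    define k where "k = (LEAST j. j < length run \<and> hit j)"
    have k: "k < length run \<and> hit k" unfolding k_def using True by (rule LeastI_ex)
    have kmin: "\<forall>j<k. \<not> hit j" using k not_less_Least[of _ "\<lambda>j. j < length run \<and> hit j"]
      unfolding k_def by (meson order.strict_trans)
    define G where "G = sieve_graph Q \<pi> (take k run)"
    have EG: "ER \<subseteq> G" unfolding G_def using keep k kmin by simp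
    obtain s where s: "s \<in> R" "s \<in> fst (run!k)" "dec_at Q \<pi> (snd (run!k)) s" using k hit_def by blast
    have "sieve_choice_ok Q \<pi> (take k run) (run!k)" using sr k by (auto simp: sieve_run_def)
    then obtain s0 where s0: "fst (run!k) = {t \<in> pg_nodes Q \<pi>. (s0, t) \<in> G\<^sup>* \<and> (t, s0) \<in> G\<^sup>*}"
      unfolding sieve_choice_ok_def is_scc_def G_def by blast
    have allR: "\<forall>s'\<in>R. s' \<in> fst (run!k)"
    proof
      fix s' assume s': "s' \<in> R"
      have "(s, s') \<in> G\<^sup>*" "(s', s) \<in> G\<^sup>*" using Rconn[OF s(1) s'] Rconn[OF s' s(1)] rtrancl_mono[OF EG] by auto
      moreover have "s' \<in> pg_nodes Q \<pi>"
      proof -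
        obtain i where "\<tau> i = s'" using inf[OF s', of 0] by blast
        then show ?thesis using reach[of i] by simp
      qed
      ultimately show "s' \<in> fst (run!k)" using s(2) unfolding s0 by (auto intro: rtrancl_trans)
    qed
    have mem: "run!k \<in> set run" using k by simp
    show ?thesis
    proof (intro exI conjI ballI)
      show "s \<in> recurrent \<tau>" using s R_def by simp
      show "dec_at Q \<pi> (snd (run!k)) s" by (rule s(3))
      fix s' assume "s' \<in> recurrent \<tau>"
      then have "s' \<in> fst (run!k)" using allR R_def by simp
      then show "snd (run!k) \<in> set (stack run s')" using mem unfolding stack_def by auto
    qed
  next
    case False
    define G where "G = sieve_graph Q \<pi> run"
    have EG: "ER \<subseteq> G" unfolding G_def using keep[of "length run"] False by simp
    define r0 where "r0 = \<tau> N0"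
    define C where "C = {t \<in> pg_nodes Q \<pi>. (r0, t) \<in> G\<^sup>* \<and> (t, r0) \<in> G\<^sup>*}"
    have Gpg: "G \<subseteq> pg_edges Q \<pi>" unfolding G_def sieve_graph_def by (rule foldl_remove_sub)
    have pg_step: "\<And>x y. (x, y) \<in> pg_edges Q \<pi> \<Longrightarrow> td_step Q \<pi> x y" by (auto simp: pg_edges_def)
    have pg_closed: "\<And>x y. (x, y) \<in> (pg_edges Q \<pi>)\<^sup>* \<Longrightarrow> x \<in> pg_nodes Q \<pi> \<Longrightarrow> y \<in> pg_nodes Q \<pi>"
    proof -
      fix x y assume "(x, y) \<in> (pg_edges Q \<pi>)\<^sup>*" "x \<in> pg_nodes Q \<pi>"
      then show "y \<in> pg_nodes Q \<pi>"
        by (induction rule: rtrancl_induct) (auto simp: pg_nodes_def pg_edges_def intro: rtrancl_into_rtrancl)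
    qed
    have r0R: "r0 \<in> R" using N0 r0_def by simp
    have r0pg: "r0 \<in> pg_nodes Q \<pi>" using reach r0_def by simp
    have Gpn: "\<And>e. (r0, e) \<in> G\<^sup>* \<Longrightarrow> e \<in> pg_nodes Q \<pi>"
    proof -
      fix e assume "(r0, e) \<in> G\<^sup>*"
      then have "(r0, e) \<in> (pg_edges Q \<pi>)\<^sup>*" using rtrancl_mono[OF Gpg] by blast
      then show "e \<in> pg_nodes Q \<pi>" using pg_closed r0pg by blast
    qed
    have cyc0: "(r0, r0) \<in> G\<^sup>+"
    proof -
      obtain j where j: "j \<ge> Suc N0" "\<tau> j = r0" using inf[OF r0R] by blast
      have "(\<tau> N0, \<tau> (Suc N0)) \<in> G" using EG unfolding ER_def by auto
      moreover have "(\<tau> (Suc N0), \<tau> j) \<in> G\<^sup>*" using path[of "Suc N0" j] j rtrancl_mono[OF EG] by auto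
      ultimately show ?thesis using j r0_def by (auto intro: rtrancl_into_trancl2)
    qed
    have succ: "\<And>s. s \<in> C \<Longrightarrow> \<exists>t\<in>C. (s, t) \<in> G"
    proof -
      fix s assume s: "s \<in> C"
      have "(s, r0) \<in> G\<^sup>+" using s cyc0 unfolding C_def by (auto intro: rtrancl_trancl_trancl)
      then obtain t where t: "(s, t) \<in> G" "(t, r0) \<in> G\<^sup>*" by (meson tranclD)
      have "(r0, t) \<in> G\<^sup>*" using s t unfolding C_def by (auto intro: rtrancl_into_rtrancl)
      then show "\<exists>t\<in>C. (s, t) \<in> G" using t Gpn unfolding C_def by auto
    qed
    have key: "\<exists>X. (\<exists>s\<in>C. dec_at Q \<pi> X s) \<and> (\<forall>s\<in>C. \<not> inc_at Q \<pi> X s)"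
    proof (rule ccontr)
      assume nk: "\<not> ?thesis"
      have incC: "\<And>X s. s \<in> C \<Longrightarrow> dec_at Q \<pi> X s \<Longrightarrow> \<exists>s'\<in>C. inc_at Q \<pi> X s'" using nk by blast
      obtain cs where cs: "owalk G r0 r0 cs" "C \<subseteq> set cs" "\<forall>e\<in>set cs. (r0, e) \<in> G\<^sup>* \<and> (e, r0) \<in> G\<^sup>*"
      proof -
        have finC: "finite C" by (rule finite_subset[OF subset_UNIV finite_UNIV])
        have "\<forall>c\<in>C. (r0, c) \<in> G\<^sup>* \<and> (c, r0) \<in> G\<^sup>*" unfolding C_def by blast
        from walk_all[OF cyc0 finC this] show ?thesis using that by blast
      qed
      have csC: "set cs \<subseteq> C" using cs(3) Gpn unfolding C_def by auto
      define L where "L = length cs"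
      have L0: "0 < L" using cs(1) by (auto simp: L_def owalk_def)
      define \<sigma> where "\<sigma> i = (if i < N0 then \<tau> i else cs ! ((i - N0) mod L))" for i
      have \<sigma>N0: "\<sigma> N0 = r0" using cs(1) by (simp add: \<sigma>_def owalk_def)
      have \<sigma>0: "\<sigma> 0 = td_init Q"
        by (cases "N0 = 0") (use \<sigma>N0 tj0 r0_def in \<open>auto simp: \<sigma>_def\<close>)
      have \<sigma>C: "\<And>i. N0 \<le> i \<Longrightarrow> \<sigma> i \<in> C"
        using csC L0 by (auto simp: \<sigma>_def L_def)
      have \<sigma>st: "\<And>i. td_step Q \<pi> (\<sigma> i) (\<sigma> (Suc i))"
      proof -
        fix i
        consider "Suc i < N0" | "Suc i = N0" | "N0 \<le> i" by linarith
        then show "td_step Q \<pi> (\<sigma> i) (\<sigma> (Suc i))"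
        proof cases
          case 1 then show ?thesis using tjs[of i] by (simp add: \<sigma>_def)
        next
          case 2 then show ?thesis using tjs[of i] \<sigma>N0 r0_def by (auto simp: \<sigma>_def)
        next
          case 3
          have "(cs ! ((i - N0) mod L), cs ! (Suc ((i - N0) mod L) mod L)) \<in> G"
            using owalk_wrap[OF cs(1)] L0 unfolding L_def by simp
          moreover have "Suc ((i - N0) mod L) mod L = (Suc i - N0) mod L"
            using 3 by (simp add: mod_Suc_eq Suc_diff_le)
          ultimately have "(\<sigma> i, \<sigma> (Suc i)) \<in> G" using 3 by (simp add: \<sigma>_def)
          then show ?thesis using Gpg pg_step by blast
        qed
      qed
      have bd: "\<And>X i. Dset Q \<pi> \<sigma> X i \<subseteq> {i..<i + (N0 + L)}"
      proof
        fix X i k assume kD: "k \<in> Dset Q \<pi> \<sigma> X i"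
        then have ki: "i \<le> k" and dk: "dec_at Q \<pi> X (\<sigma> k)"
          and ni: "\<And>j. i \<le> j \<Longrightarrow> j < k \<Longrightarrow> \<not> inc_at Q \<pi> X (\<sigma> j)" by (auto simp: Dset_def)
        show "k \<in> {i..<i + (N0 + L)}"
        proof (rule ccontr)
          assume "k \<notin> {i..<i + (N0 + L)}"
          then have big: "i + N0 + L \<le> k" using ki by auto
          have "\<sigma> k \<in> C" using big \<sigma>C by simp
          then obtain s' where s': "s' \<in> C" "inc_at Q \<pi> X s'" using incC dk by blast
          then obtain idx where idx: "idx < L" "cs ! idx = s'" using cs(2) s'(1) unfolding L_def by (meson in_set_conv_nth subsetD)
          obtain t where t: "i \<le> t" "t < i + L" "t mod L = idx" using mod_hit[OF L0 idx(1)] by blast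
          have "\<sigma> (t + N0) = s'" using t idx by (simp add: \<sigma>_def)
          moreover have "i \<le> t + N0" "t + N0 < k" using t big by auto
          ultimately show False using ni s'(2) by blast
        qed
      qed
      show False by (rule sem[OF wf pol sol \<sigma>0 \<sigma>st bd])
    qed
    then obtain X where X: "\<exists>s\<in>C. dec_at Q \<pi> X s" "\<forall>s\<in>C. \<not> inc_at Q \<pi> X s" by blast
    have "sieve_choice_ok Q \<pi> run (C, X)"
      unfolding sieve_choice_ok_def fst_conv snd_conv
    proof (intro conjI ballI impI)
      show "is_scc (pg_nodes Q \<pi>) (sieve_graph Q \<pi> run) C"
        unfolding is_scc_def C_def G_def using r0pg by blast
      show "\<exists>s\<in>C. dec_at Q \<pi> X s" by (rule X(1))
      fix s assume "s \<in> C" then show "\<not> inc_at Q \<pi> X s" using X(2) by blast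
    next
      fix CX' assume CX': "CX' \<in> set run" "snd CX' = X"
      show "\<not> C \<subseteq> fst CX'"
      proof
        assume sub: "C \<subseteq> fst CX'"
        obtain j where j: "j < length run" "run ! j = CX'" using CX'(1) by (auto simp: in_set_conv_nth)
        obtain s where s: "s \<in> C" "dec_at Q \<pi> X s" using X(1) by blast
        obtain t where t: "t \<in> C" "(s, t) \<in> G" using succ[OF s(1)] by blast
        have "(s, t) \<in> remove_edges Q \<pi> (sieve_graph Q \<pi> (take j run)) (run!j)"
          using sieve_graph_later[OF j(1)] t(2) unfolding G_def by blast
        then show False using s t sub j CX'(2) by (auto simp: remove_edges_def)
      qed
    qed
    then show ?thesis using sr by (auto simp: sieve_run_def)
  qed
qed

end
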